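(* For all closed terms $P,Q\in\mathcal S_A$: $\mathrm{EqFSCL}\vdash P=Q$ if and only if $\mathrm{FSCL}\vdash P=Q$, where $\mathrm{FSCL}\vdash P=Q$ means that $P=Q$ is derivable in equational logic over the signature $\Sigma_{CP}(A)\cup\Sigma_{SCL}(A)$ from the axioms CP1–CP4 together with $\neg x=\mathsf F\triangleleft x\triangleright\mathsf T$, $x\land^\circ y=y\triangleleft x\triangleright\mathsf F$ and $x\lor^\circ y=\mathsf T\triangleleft x\triangleright y$.
   Context: Let $A$ be a nonempty set of atoms. $\Sigma_{SCL}(A)$ has constants $\mathsf T,\mathsf F$, atoms $a\in A$, unary $\neg$, binary $\land^\circ$ (left-sequential conjunction) and $\lor^\circ$ (left-sequential disjunction); $\mathcal S_A$ is the set of its closed terms. $\Sigma_{CP}(A)$ has constants $\mathsf T,\mathsf F$, atoms $a\in A$, and Hoare's ternary conditional $x\triangleleft y\triangleright z$ ("if $y$ then $x$ else $z$"). CP consists of: (CP1) $x\triangleleft\mathsf T\triangleright y=x$; (CP2) $x\triangleleft\mathsf F\triangleright y=y$; (CP3) $\mathsf T\triangleleft x\triangleright\mathsf F=x$; (CP4) $x\triangleleft(y\triangleleft z\triangleright u)\triangleright v=(x\triangleleft y\triangleright v)\triangleleft z\triangleright(x\triangleleft u\triangleright v)$. (In the paper, FSCL is defined as the logic whose consequences are those of exporting $\{\mathsf T,\neg,\land^\circ\}$ from CP plus the definitions of $\neg$ and $\land^\circ$, with $\mathsf F=\neg\mathsf T$ and $x\lor^\circ y=\neg(\neg x\land^\circ\neg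 y)$ added; these are derivably equal to the definitions above.) EqFSCL is the set of equations in variables $x,y,z$: (F1) $\mathsf F=\neg\mathsf T$; (F2) $x\lor^\circ y=\neg(\neg x\land^\circ\neg y)$; (F3) $\neg\neg x=x$; (F4) $\mathsf T\land^\circ x=x$; (F5) $x\lor^\circ\mathsf F=x$; (F6) $\mathsf F\land^\circ x=\mathsf F$; (F7) $(x\land^\circ y)\land^\circ z=x\land^\circ(y\land^\circ z)$; (F8) $\neg x\land^\circ\mathsf F=x\land^\circ\mathsf F$; (F9) $(x\land^\circ\mathsf F)\lor^\circ y=(x\lor^\circ\mathsf T)\land^\circ y$; (F10) $(x\land^\circ y)\lor^\circ(z\land^\circ\mathsf F)=(x\lor^\circ(z\land^\circ\mathsf F))\land^\circ(y\lor^\circ(z\land^\circ\mathsf F))$. $\vdash$ denotes derivability in equational logic. *)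

theory Defs
  imports Main
begin

text \<open>Terms over the combined signature Sigma_CP(A) \<union> Sigma_SCL(A) with variables.
  The atom set A is the (nonempty) type 'a.\<close>
datatype 'a trm =
    Var nat
  | Tt
  | Ff
  | At 'a
  | Neg "'a trm"
  | LAnd "'a trm" "'a trm"
  | LOr "'a trm" "'a trm"
  | Cond "'a trm" "'a trm" "'a trm"  \<comment> \<open>Cond x y z = x \<triangleleft> y \<triangleright> z\<close>

primrec subst :: "(nat \<Rightarrow> 'a trm) \<Rightarrow> 'a trm \<Rightarrow> 'a trm" where
  "subst s (Var n) = s n"
| "subst s Tt = Tt"
| "subst s Ff = Ff"
| "subst s (At a) = At a"
| "subst s (Neg t) = Neg (subst s t)"
| "subst s (LAnd t u) = LAnd (subst s t) (subst s u)"
| "subst s (LOr t u) = LOr (subst s t) (subst s u)"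
| "subst s (Cond t u v) = Cond (subst s t) (subst s u) (subst s v)"

primrec scl_term :: "'a trm \<Rightarrow> bool" where
  "scl_term (Var n) = True"
| "scl_term Tt = True"
| "scl_term Ff = True"
| "scl_term (At a) = True"
| "scl_term (Neg t) = scl_term t"
| "scl_term (LAnd t u) = (scl_term t \<and> scl_term u)"
| "scl_term (LOr t u) = (scl_term t \<and> scl_term u)"
| "scl_term (Cond t u v) = False"

primrec closed :: "'a trm \<Rightarrow> bool" where
  "closed (Var n) = False"
| "closed Tt = True"
| "closed Ff = True"
| "closed (At a) = True"
| "closed (Neg t) = closed t"
| "closed (LAnd t u) = (closed t \<and> closed u)"
| "closed (LOr t u) = (closed t \<and> closed u)"
| "closed (Cond t u v) = (closed t \<and> closed u \<and> closed v)"

definition closed_scl :: "'a trm \<Rightarrow> bool" where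
  "closed_scl t \<longleftrightarrow> scl_term t \<and> closed t"

text \<open>Equational logic derivability from axioms E over the signature whose terms
  are those satisfying Sg (Sg is closed under subterms and contains all variables).\<close>
inductive derivable :: "('a trm \<times> 'a trm) set \<Rightarrow> ('a trm \<Rightarrow> bool) \<Rightarrow> 'a trm \<Rightarrow> 'a trm \<Rightarrow> bool"
  for E :: "('a trm \<times> 'a trm) set" and Sg :: "'a trm \<Rightarrow> bool" where
  ax: "(l, r) \<in> E \<Longrightarrow> (\<forall>n. Sg (s n)) \<Longrightarrow> Sg (subst s l) \<Longrightarrow> Sg (subst s r)
       \<Longrightarrow> derivable E Sg (subst s l) (subst s r)"
| refl: "Sg t \<Longrightarrow> derivable E Sg t t"
| sym: "derivable E Sg t u \<Longrightarrow> derivable E Sg u t"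
| trans: "derivable E Sg t u \<Longrightarrow> derivable E Sg u v \<Longrightarrow> derivable E Sg t v"
| cong_neg: "derivable E Sg t t' \<Longrightarrow> Sg (Neg t) \<Longrightarrow> Sg (Neg t')
       \<Longrightarrow> derivable E Sg (Neg t) (Neg t')"
| cong_and: "derivable E Sg t t' \<Longrightarrow> derivable E Sg u u'
       \<Longrightarrow> Sg (LAnd t u) \<Longrightarrow> Sg (LAnd t' u')
       \<Longrightarrow> derivable E Sg (LAnd t u) (LAnd t' u')"
| cong_or: "derivable E Sg t t' \<Longrightarrow> derivable E Sg u u'
       \<Longrightarrow> Sg (LOr t u) \<Longrightarrow> Sg (LOr t' u')
       \<Longrightarrow> derivable E Sg (LOr t u) (LOr t' u')"
| cong_cond: "derivable E Sg t t' \<Longrightarrow> derivable E Sg u u' \<Longrightarrow> derivable E Sg v v'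
       \<Longrightarrow> Sg (Cond t u v) \<Longrightarrow> Sg (Cond t' u' v')
       \<Longrightarrow> derivable E Sg (Cond t u v) (Cond t' u' v')"

abbreviation "vx \<equiv> Var 0"
abbreviation "vy \<equiv> Var 1"
abbreviation "vz \<equiv> Var 2"
abbreviation "vu \<equiv> Var 3"
abbreviation "vv \<equiv> Var 4"

definition EqFSCL :: "('a trm \<times> 'a trm) set" where
  "EqFSCL = {
    (Ff, Neg Tt),
    (LOr vx vy, Neg (LAnd (Neg vx) (Neg vy))),
    (Neg (Neg vx), vx),
    (LAnd Tt vx, vx),
    (LOr vx Ff, vx),
    (LAnd Ff vx, Ff),
    (LAnd (LAnd vx vy) vz, LAnd vx (LAnd vy vz)),
    (LAnd (Neg vx) Ff, LAnd vx Ff),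
    (LOr (LAnd vx Ff) vy, LAnd (LOr vx Tt) vy),
    (LOr (LAnd vx vy) (LAnd vz Ff), LAnd (LOr vx (LAnd vz Ff)) (LOr vy (LAnd vz Ff)))
  }"

definition FSCL_ax :: "('a trm \<times> 'a trm) set" where
  "FSCL_ax = {
    (Cond vx Tt vy, vx),
    (Cond vx Ff vy, vy),
    (Cond Tt vx Ff, vx),
    (Cond vx (Cond vy vz vu) vv, Cond (Cond vx vy vv) vz (Cond vx vu vv)),
    (Neg vx, Cond Ff vx Tt),
    (LAnd vx vy, Cond vy vx Ff),
    (LOr vx vy, Cond Tt vx vy)
  }"

end

theory Submission
  imports Defs
begin

datatype 'a tr = Lf bool | Nd 'a "'a tr" "'a tr"

primrec sub :: "'a tr \<Rightarrow> 'a tr \<Rightarrow> 'a tr \<Rightarrow> 'a tr" where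
  "sub (Lf b) X Y = (if b then X else Y)"
| "sub (Nd a l r) X Y = Nd a (sub l X Y) (sub r X Y)"

primrec ev :: "(nat \<Rightarrow> 'a tr) \<Rightarrow> 'a trm \<Rightarrow> 'a tr" where
  "ev \<rho> (Var n) = \<rho> n"
| "ev \<rho> Tt = Lf True"
| "ev \<rho> Ff = Lf False"
| "ev \<rho> (At a) = Nd a (Lf True) (Lf False)"
| "ev \<rho> (Neg t) = sub (ev \<rho> t) (Lf False) (Lf True)"
| "ev \<rho> (LAnd t u) = sub (ev \<rho> t) (ev \<rho> u) (Lf False)"
| "ev \<rho> (LOr t u) = sub (ev \<rho> t) (Lf True) (ev \<rho> u)"
| "ev \<rho> (Cond t u v) = sub (ev \<rho> u) (ev \<rho> t) (ev \<rho> v)"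

lemma sub_assoc: "sub (sub X A B) C D = sub X (sub A C D) (sub B C D)"
  by (induction X) auto

lemma sub_id[simp]: "sub X (Lf True) (Lf False) = X"
  by (induction X) auto

lemma ev_subst: "ev \<rho> (subst s t) = ev (\<lambda>n. ev \<rho> (s n)) t"
  by (induction t) auto

lemma derivable_Sg: "derivable E Sg t u \<Longrightarrow> Sg t \<and> Sg u"
  by (induction rule: derivable.induct) auto

lemma sound:
  assumes "derivable E Sg t u" and "\<And>l r \<rho>. (l, r) \<in> E \<Longrightarrow> ev \<rho> l = ev \<rho> r"
  shows "ev \<rho> t = ev \<rho> u"
  using assms(1)
proof (induction arbitrary: \<rho> rule: derivable.induct)
  case (ax l r s)
  then show ?case using assms(2) by (simp add: ev_subst)
qed auto

lemma FSCL_valid: "(l, r) \<in> FSCL_ax \<Longrightarrow> ev \<rho> l = ev \<rho> r"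
  unfolding FSCL_ax_def by (auto simp: sub_assoc)

lemma sub_leafF_noT: "sub (sub X (Lf False) (Lf False)) A B = sub X B B"
  by (simp add: sub_assoc)

lemma sub_FF_absorb: "sub (sub Z (Lf False) (Lf False)) A (Lf False) = sub Z (Lf False) (Lf False)"
  by (induction Z) auto

lemma EqFSCL_valid: "(l, r) \<in> EqFSCL \<Longrightarrow> ev \<rho> l = ev \<rho> r"
  unfolding EqFSCL_def by (auto simp: sub_assoc sub_FF_absorb)


abbreviation FD (infix "\<approx>F" 50) where "t \<approx>F u \<equiv> derivable FSCL_ax (\<lambda>_. True) t u"

lemma Fax: "(l, r) \<in> FSCL_ax \<Longrightarrow> subst s l \<approx>F subst s r"
  by (rule derivable.ax) auto

lemma F_cp1: "Cond x Tt y \<approx>F x"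
  using Fax[of "Cond vx Tt vy" vx "\<lambda>n. if n = 0 then x else y"] by (simp add: FSCL_ax_def)
lemma F_cp2: "Cond x Ff y \<approx>F y"
  using Fax[of "Cond vx Ff vy" vy "\<lambda>n. if n = 0 then x else y"] by (simp add: FSCL_ax_def)
lemma F_cp3: "Cond Tt x Ff \<approx>F x"
  using Fax[of "Cond Tt vx Ff" vx "\<lambda>n. x"] by (simp add: FSCL_ax_def)
lemma F_cp4: "Cond x (Cond y z u) v \<approx>F Cond (Cond x y v) z (Cond x u v)"
  using Fax[of "Cond vx (Cond vy vz vu) vv" "Cond (Cond vx vy vv) vz (Cond vx vu vv)"
      "\<lambda>n. if n = 0 then x else if n = 1 then y else if n = 2 then z else if n = 3 then u else v"]
  by (simp add: FSCL_ax_def)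
lemma F_neg: "Neg x \<approx>F Cond Ff x Tt"
  using Fax[of "Neg vx" "Cond Ff vx Tt" "\<lambda>n. x"] by (simp add: FSCL_ax_def)
lemma F_and: "LAnd x y \<approx>F Cond y x Ff"
  using Fax[of "LAnd vx vy" "Cond vy vx Ff" "\<lambda>n. if n = 0 then x else y"] by (simp add: FSCL_ax_def)
lemma F_or: "LOr x y \<approx>F Cond Tt x y"
  using Fax[of "LOr vx vy" "Cond Tt vx vy" "\<lambda>n. if n = 0 then x else y"] by (simp add: FSCL_ax_def)

lemma F_refl: "t \<approx>F t" by (rule derivable.refl) simp
lemma F_trans: "t \<approx>F u \<Longrightarrow> u \<approx>F v \<Longrightarrow> t \<approx>F v" by (rule derivable.trans)
lemma F_sym: "t \<approx>F u \<Longrightarrow> u \<approx>F t" by (rule derivable.sym)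
lemma F_cond: "a \<approx>F a' \<Longrightarrow> b \<approx>F b' \<Longrightarrow> c \<approx>F c' \<Longrightarrow> Cond a b c \<approx>F Cond a' b' c'"
  by (rule derivable.cong_cond) auto

lemmas [trans] = F_trans

primrec bf :: "'a tr \<Rightarrow> 'a trm" where
  "bf (Lf b) = (if b then Tt else Ff)"
| "bf (Nd a l r) = Cond (bf l) (At a) (bf r)"

lemma bf_cond: "Cond (bf X) (bf Y) (bf Z) \<approx>F bf (sub Y X Z)"
proof (induction Y)
  case (Lf b)
  then show ?case by (cases b) (auto intro: F_cp1 F_cp2)
next
  case (Nd a l r)
  have "Cond (bf X) (bf (Nd a l r)) (bf Z) \<approx>F Cond (Cond (bf X) (bf l) (bf Z)) (At a) (Cond (bf X) (bf r) (bf Z))"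
    by (simp add: F_cp4)
  also have "... \<approx>F Cond (bf (sub l X Z)) (At a) (bf (sub r X Z))"
    using Nd by (intro F_cond F_refl)
  finally show ?case by simp
qed

lemma F_complete_bf: "closed t \<Longrightarrow> t \<approx>F bf (ev \<rho> t)"
proof (induction t)
  case (At a)
  then show ?case using F_sym[OF F_cp3[of "At a"]] by simp
next
  case (Neg t)
  have "Neg t \<approx>F Cond Ff t Tt" by (rule F_neg)
  also have "... \<approx>F Cond (bf (Lf False)) (bf (ev \<rho> t)) (bf (Lf True))"
    using Neg by (auto intro: F_cond F_refl)
  also have "... \<approx>F bf (ev \<rho> (Neg t))" using bf_cond[of "Lf False" "ev \<rho> t" "Lf True"] by simp
  finally show ?case .
next
  case (LAnd t u)
  have "LAnd t u \<approx>F Cond u t Ff" by (rule F_and)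
  also have "... \<approx>F Cond (bf (ev \<rho> u)) (bf (ev \<rho> t)) (bf (Lf False))"
    using LAnd by (auto intro: F_cond F_refl)
  also have "... \<approx>F bf (ev \<rho> (LAnd t u))" using bf_cond[of "ev \<rho> u" "ev \<rho> t" "Lf False"] by simp
  finally show ?case .
next
  case (LOr t u)
  have "LOr t u \<approx>F Cond Tt t u" by (rule F_or)
  also have "... \<approx>F Cond (bf (Lf True)) (bf (ev \<rho> t)) (bf (ev \<rho> u))"
    using LOr by (auto intro: F_cond F_refl)
  also have "... \<approx>F bf (ev \<rho> (LOr t u))" using bf_cond[of "Lf True" "ev \<rho> t" "ev \<rho> u"] by simp
  finally show ?case .
next
  case (Cond t u v)
  have "Cond t u v \<approx>F Cond (bf (ev \<rho> t)) (bf (ev \<rho> u)) (bf (ev \<rho> v))"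
    using Cond by (auto intro: F_cond)
  also have "... \<approx>F bf (ev \<rho> (Cond t u v))" using bf_cond[of "ev \<rho> t" "ev \<rho> u" "ev \<rho> v"] by simp
  finally show ?case .
qed (auto intro: F_refl)

lemma F_complete: "closed t \<Longrightarrow> closed u \<Longrightarrow> ev \<rho> t = ev \<rho> u \<Longrightarrow> t \<approx>F u"
  by (metis F_complete_bf F_sym F_trans)


abbreviation EQ (infix "\<approx>" 50) where "t \<approx> u \<equiv> derivable EqFSCL scl_term t u"

lemma EQ_part_equivp: "part_equivp (derivable EqFSCL scl_term)"
proof (rule part_equivpI)
  show "\<exists>x. derivable EqFSCL scl_term x x" using derivable.refl[of scl_term Tt EqFSCL] by auto
  show "symp (derivable EqFSCL scl_term)" by (auto intro: sympI derivable.sym)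
  show "transp (derivable EqFSCL scl_term)" by (auto intro: transpI derivable.trans)
qed

quotient_type 'a q = "'a trm" / partial: "derivable EqFSCL scl_term"
  by (rule EQ_part_equivp)

lift_definition qT :: "'a q" is Tt by (rule derivable.refl) simp
lift_definition qF :: "'a q" is Ff by (rule derivable.refl) simp
lift_definition qAt :: "'a \<Rightarrow> 'a q" is At by (rule derivable.refl) simp
lift_definition qVar :: "nat \<Rightarrow> 'a q" is Var by (rule derivable.refl) simp
lift_definition qNeg :: "'a q \<Rightarrow> 'a q" is Neg
  by (rule derivable.cong_neg) (auto dest: derivable_Sg)
lift_definition qAnd :: "'a q \<Rightarrow> 'a q \<Rightarrow> 'a q" is LAnd
  by (rule derivable.cong_and) (auto dest: derivable_Sg)
lift_definition qOr :: "'a q \<Rightarrow> 'a q \<Rightarrow> 'a q" is LOr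
  by (rule derivable.cong_or) (auto dest: derivable_Sg)

primrec qev :: "'a trm \<Rightarrow> 'a q" where
  "qev (Var n) = qVar n"
| "qev Tt = qT"
| "qev Ff = qF"
| "qev (At a) = qAt a"
| "qev (Neg t) = qNeg (qev t)"
| "qev (LAnd t u) = qAnd (qev t) (qev u)"
| "qev (LOr t u) = qOr (qev t) (qev u)"
| "qev (Cond t u v) = undefined"

lemma qev_cr: "scl_term t \<Longrightarrow> cr_q t (qev t)"
proof (induction t)
  case (Var n) then show ?case using qVar.transfer by (auto simp: rel_fun_def pcr_q_def OO_def trm.rel_eq)
next
  case Tt then show ?case using qT.transfer by (auto simp: pcr_q_def OO_def trm.rel_eq)
next
  case Ff then show ?case using qF.transfer by (auto simp: pcr_q_def OO_def trm.rel_eq)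
next
  case (At a) then show ?case using qAt.transfer by (auto simp: rel_fun_def pcr_q_def OO_def trm.rel_eq)
next
  case (Neg t) then show ?case using qNeg.transfer
    by (auto simp: rel_fun_def pcr_q_def OO_def trm.rel_eq)
next
  case (LAnd t u) then show ?case using qAnd.transfer
    by (auto simp: rel_fun_def pcr_q_def OO_def trm.rel_eq)
next
  case (LOr t u) then show ?case using qOr.transfer
    by (auto simp: rel_fun_def pcr_q_def OO_def trm.rel_eq)
qed auto

lemma qev_eq_iff: "scl_term t \<Longrightarrow> scl_term u \<Longrightarrow> qev t = qev u \<longleftrightarrow> t \<approx> u"
  using qev_cr[of t] qev_cr[of u] Quotient_rel[OF Quotient_q, of t u]
  by (auto simp: cr_q_def)

lemma scl_subst: "scl_term t \<Longrightarrow> (\<forall>n. scl_term (s n)) \<Longrightarrow> scl_term (subst s t)"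
  by (induction t) auto

lemma EQax: "(l, r) \<in> EqFSCL \<Longrightarrow> \<forall>n. scl_term (s n) \<Longrightarrow> subst s l \<approx> subst s r"
  by (rule derivable.ax) (auto simp: EqFSCL_def intro!: scl_subst)

definition s3 :: "'a trm \<Rightarrow> 'a trm \<Rightarrow> 'a trm \<Rightarrow> nat \<Rightarrow> 'a trm" where
  "s3 x y z n = (if n = 0 then x else if n = 1 then y else if n = 2 then z else Tt)"

lemma EQax3: "(l, r) \<in> EqFSCL \<Longrightarrow> scl_term x \<Longrightarrow> scl_term y \<Longrightarrow> scl_term z \<Longrightarrow>
   subst (s3 x y z) l \<approx> subst (s3 x y z) r"
  by (rule EQax) (auto simp: s3_def)

lemma rq: "R x x \<Longrightarrow> R = derivable EqFSCL scl_term \<Longrightarrow> scl_term x"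
  using derivable_Sg by blast

lemma f1: "qF = qNeg qT"
  by transfer (insert EQax3[of Ff "Neg Tt" Tt Tt Tt], auto simp: EqFSCL_def s3_def)
lemma f2: "qOr x y = qNeg (qAnd (qNeg x) (qNeg y))"
  apply transfer
  subgoal for x y using EQax3[of "LOr vx vy" "Neg (LAnd (Neg vx) (Neg vy))" x y Tt] by (auto simp: EqFSCL_def s3_def dest: derivable_Sg)
  done
lemma f3: "qNeg (qNeg x) = x"
  apply transfer
  subgoal for x using EQax3[of "Neg (Neg vx)" vx x Tt Tt] by (auto simp: EqFSCL_def s3_def dest: derivable_Sg)
  done
lemma f4: "qAnd qT x = x"
  apply transfer
  subgoal for x using EQax3[of "LAnd Tt vx" vx x Tt Tt] by (auto simp: EqFSCL_def s3_def dest: derivable_Sg)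
  done
lemma f5: "qOr x qF = x"
  apply transfer
  subgoal for x using EQax3[of "LOr vx Ff" vx x Tt Tt] by (auto simp: EqFSCL_def s3_def dest: derivable_Sg)
  done
lemma f6: "qAnd qF x = qF"
  apply transfer
  subgoal for x using EQax3[of "LAnd Ff vx" Ff x Tt Tt] by (auto simp: EqFSCL_def s3_def dest: derivable_Sg)
  done
lemma f7: "qAnd (qAnd x y) z = qAnd x (qAnd y z)"
  apply transfer
  subgoal for x y z using EQax3[of "LAnd (LAnd vx vy) vz" "LAnd vx (LAnd vy vz)" x y z] by (auto simp: EqFSCL_def s3_def dest: derivable_Sg)
  done
lemma f8: "qAnd (qNeg x) qF = qAnd x qF"
  apply transfer
  subgoal for x using EQax3[of "LAnd (Neg vx) Ff" "LAnd vx Ff" x Tt Tt] by (auto simp: EqFSCL_def s3_def dest: derivable_Sg)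
  done
lemma f9: "qOr (qAnd x qF) y = qAnd (qOr x qT) y"
  apply transfer
  subgoal for x y using EQax3[of "LOr (LAnd vx Ff) vy" "LAnd (LOr vx Tt) vy" x y Tt] by (auto simp: EqFSCL_def s3_def dest: derivable_Sg)
  done
lemma f10: "qOr (qAnd x y) (qAnd z qF) = qAnd (qOr x (qAnd z qF)) (qOr y (qAnd z qF))"
  apply transfer
  subgoal for x y z using EQax3[of "LOr (LAnd vx vy) (LAnd vz Ff)" "LAnd (LOr vx (LAnd vz Ff)) (LOr vy (LAnd vz Ff))" x y z] by (auto simp: EqFSCL_def s3_def dest: derivable_Sg)
  done


lemma negT: "qNeg qT = qF" by (simp add: f1)
lemma negF: "qNeg qF = qT" by (simp add: f1 f3)
lemma dm1: "qNeg (qOr x y) = qAnd (qNeg x) (qNeg y)" by (simp add: f2 f3)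
lemma dm2: "qNeg (qAnd x y) = qOr (qNeg x) (qNeg y)" by (simp add: f2 f3)
lemma andT: "qAnd x qT = x"
proof -
  have "qAnd x qT = qNeg (qNeg (qAnd x qT))" by (simp add: f3)
  also have "... = qNeg (qOr (qNeg x) qF)" by (simp add: dm2 negT)
  also have "... = x" by (simp add: f5 f3)
  finally show ?thesis .
qed
lemma orF: "qOr qF x = x" by (simp add: f2 negF f4 f3)
lemma orT: "qOr qT x = qT" by (simp add: f2 negT f6 negF)
lemma or_assoc: "qOr (qOr x y) z = qOr x (qOr y z)" by (simp add: f2 f3 f7)
lemma f8d: "qOr (qNeg x) qT = qOr x qT" by (simp add: f2 f3 negT f8)
lemma f10d: "qAnd (qOr x y) (qOr z qT) = qOr (qAnd x (qOr z qT)) (qAnd y (qOr z qT))"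
proof -
  have "qNeg (qAnd (qOr x y) (qOr z qT)) = qOr (qAnd (qNeg x) (qNeg y)) (qAnd (qNeg z) qF)"
    by (simp add: dm1 dm2 negT)
  also have "... = qAnd (qOr (qNeg x) (qAnd (qNeg z) qF)) (qOr (qNeg y) (qAnd (qNeg z) qF))"
    by (rule f10)
  also have "... = qNeg (qOr (qAnd x (qOr z qT)) (qAnd y (qOr z qT)))"
    by (simp add: dm1 dm2 negT)
  finally show ?thesis by (metis f3)
qed
lemma h1: "qAnd x qF = qAnd (qOr x qT) qF" using f9[of x qF] by (simp add: f5)
lemma h2: "qOr x qT = qOr (qAnd x qF) qT" using f9[of x qT] by (simp add: andT)
lemma hi: "qOr (qAnd x y) qT = qOr (qAnd x (qOr y qT)) qT"
proof -
  have "qOr (qAnd x y) qT = qOr (qAnd x (qAnd y qF)) qT" by (subst h2) (simp add: f7)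
  also have "... = qOr (qAnd x (qAnd (qOr y qT) qF)) qT" by (subst h1) simp
  also have "... = qOr (qAnd x (qOr y qT)) qT" by (subst (2) h2) (simp add: f7)
  finally show ?thesis .
qed

definition TTq :: "'a q \<Rightarrow> bool" where "TTq v \<longleftrightarrow> qOr v qT = v"

lemma TTq_T: "TTq qT" by (simp add: TTq_def orT)
lemma TTq_or: "TTq v2 \<Longrightarrow> TTq (qOr v1 v2)" by (simp add: TTq_def or_assoc)
lemma la: "TTq v \<Longrightarrow> qOr v y = v"
  by (metis TTq_def or_assoc orT)
lemma lb: "TTq v \<Longrightarrow> qNeg v = qAnd v qF"
  by (metis TTq_def dm1 negT f8)
lemma lc: "TTq v \<Longrightarrow> qNeg (qAnd v qF) = v"
  by (metis TTq_def dm2 negF f8d)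
lemma ld: "TTq v \<Longrightarrow> qAnd (qOr x y) v = qOr (qAnd x v) (qAnd y v)"
  by (metis TTq_def f10d)
lemma le: "qAnd (qAnd w qF) x = qAnd w qF" by (simp add: f7 f6)
lemma lf: "TTq v \<Longrightarrow> qAnd (qOr x (qAnd w qF)) v = qOr (qAnd x v) (qAnd w qF)"
  by (metis f10 la)
lemma lg: "TTq q \<Longrightarrow> qOr (qAnd q qF) y = qAnd q y"
  by (metis TTq_def f9)


inductive tt :: "'a trm \<Rightarrow> bool" where
  tt_T: "tt Tt"
| tt_N: "tt p1 \<Longrightarrow> tt p2 \<Longrightarrow> tt (LOr (LAnd (At a) p1) p2)"

definition ffc :: "'a trm \<Rightarrow> bool" where "ffc t \<longleftrightarrow> (\<exists>p. t = LAnd p Ff \<and> tt p)"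

datatype kind = KL | KA | KO

inductive islit :: "'a trm \<Rightarrow> bool" where
  islitP: "tt R \<Longrightarrow> tt Q \<Longrightarrow> islit (LOr (LAnd (At a) R) (LAnd Q Ff))"
| islitN: "tt R \<Longrightarrow> tt Q \<Longrightarrow> islit (LOr (LAnd (Neg (At a)) R) (LAnd Q Ff))"

inductive cm :: "kind \<Rightarrow> 'a trm \<Rightarrow> bool" where
  cmL: "islit L \<Longrightarrow> cm KL L"
| cmA: "cm k A \<Longrightarrow> k \<noteq> KA \<Longrightarrow> cm k' B \<Longrightarrow> cm KA (LAnd A B)"
| cmO: "cm k A \<Longrightarrow> k \<noteq> KO \<Longrightarrow> cm k' B \<Longrightarrow> cm KO (LOr A B)"

definition canon :: "'a trm \<Rightarrow> bool" where
  "canon t \<longleftrightarrow> tt t \<or> ffc t \<or> (\<exists>p M k. t = LAnd p M \<and> tt p \<and> cm k M)"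

lemma tt_scl: "tt p \<Longrightarrow> scl_term p \<and> closed p"
  by (induction rule: tt.induct) auto
lemma cm_scl: "cm k M \<Longrightarrow> scl_term M \<and> closed M"
  by (induction rule: cm.induct) (auto elim!: islit.cases dest: tt_scl)
lemma canon_scl: "canon t \<Longrightarrow> scl_term t \<and> closed t"
  by (auto simp: canon_def ffc_def dest: tt_scl cm_scl)

lemma tt_TTq: "tt p \<Longrightarrow> TTq (qev p)"
  by (induction rule: tt.induct) (auto simp: TTq_T TTq_or)

lemma ttand: "tt p \<Longrightarrow> tt q \<Longrightarrow> \<exists>r. tt r \<and> qev r = qAnd (qev p) (qev q)"
proof (induction arbitrary: q rule: tt.induct)
  case tt_T then show ?case by (auto simp: f4)
next
  case (tt_N p1 p2 a)
  obtain r1 where r1: "tt r1" "qev r1 = qAnd (qev p1) (qev q)" using tt_N by blast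
  obtain r2 where r2: "tt r2" "qev r2 = qAnd (qev p2) (qev q)" using tt_N by blast
  have "qAnd (qev (LOr (LAnd (At a) p1) p2)) (qev q) = qOr (qAnd (qAt a) (qev r1)) (qev r2)"
    using r1 r2 tt_TTq[OF tt_N(5)] by (simp add: ld f7)
  then show ?case using r1 r2 by (auto intro!: exI[of _ "LOr (LAnd (At a) r1) r2"] tt.intros)
qed

fun dk :: "kind \<Rightarrow> kind" where "dk KL = KL" | "dk KA = KO" | "dk KO = KA"

lemma islit_cases:
  assumes "islit L"
  obtains a R Q where "tt R" "tt Q" "L = LOr (LAnd (At a) R) (LAnd Q Ff)"
  | a R Q where "tt R" "tt Q" "L = LOr (LAnd (Neg (At a)) R) (LAnd Q Ff)"
  using assms by (cases rule: islit.cases) auto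

lemma neg_lit_aux1: "tt R \<Longrightarrow> tt Q \<Longrightarrow> qNeg (qev (LOr (LAnd (At a) R) (LAnd Q Ff))) = qev (LOr (LAnd (Neg (At a)) Q) (LAnd R Ff))"
proof -
  assume RQ: "tt R" "tt Q"
  note T = tt_TTq[OF RQ(1)] tt_TTq[OF RQ(2)]
  have "qNeg (qev (LOr (LAnd (At a) R) (LAnd Q Ff))) = qAnd (qNeg (qAnd (qAt a) (qev R))) (qNeg (qAnd (qev Q) qF))"
    by (simp add: dm1)
  also have "... = qAnd (qOr (qNeg (qAt a)) (qAnd (qev R) qF)) (qev Q)"
    by (simp only: dm2[of "qAt a"] lb[OF T(1)] lc[OF T(2)])
  also have "... = qOr (qAnd (qNeg (qAt a)) (qev Q)) (qAnd (qev R) qF)"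
    by (rule lf[OF T(2)])
  finally show ?thesis by simp
qed

lemma neg_lit_aux2: "tt R \<Longrightarrow> tt Q \<Longrightarrow> qNeg (qev (LOr (LAnd (Neg (At a)) R) (LAnd Q Ff))) = qev (LOr (LAnd (At a) Q) (LAnd R Ff))"
proof -
  assume RQ: "tt R" "tt Q"
  note T = tt_TTq[OF RQ(1)] tt_TTq[OF RQ(2)]
  have "qNeg (qev (LOr (LAnd (Neg (At a)) R) (LAnd Q Ff))) = qAnd (qNeg (qAnd (qNeg (qAt a)) (qev R))) (qNeg (qAnd (qev Q) qF))"
    by (simp add: dm1)
  also have "... = qAnd (qOr (qAt a) (qAnd (qev R) qF)) (qev Q)"
    by (simp only: dm2[of "qNeg (qAt a)"] f3 lb[OF T(1)] lc[OF T(2)])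
  also have "... = qOr (qAnd (qAt a) (qev Q)) (qAnd (qev R) qF)"
    by (rule lf[OF T(2)])
  finally show ?thesis by simp
qed

lemma neg_lit: "islit L \<Longrightarrow> \<exists>L'. islit L' \<and> qev L' = qNeg (qev L)"
proof -
  assume "islit L"
  then show ?thesis
  proof (cases rule: islit_cases)
    case (1 a R Q)
    show ?thesis
      apply (rule exI[of _ "LOr (LAnd (Neg (At a)) Q) (LAnd R Ff)"], rule conjI, rule islitN[OF 1(2) 1(1)])
      unfolding 1(3) by (rule neg_lit_aux1[OF 1(1,2), symmetric])
  next
    case (2 a R Q)
    show ?thesis
      apply (rule exI[of _ "LOr (LAnd (At a) Q) (LAnd R Ff)"], rule conjI, rule islitP[OF 2(2) 2(1)])
      unfolding 2(3) by (rule neg_lit_aux2[OF 2(1,2), symmetric])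
  qed
qed

lemma neg_cm: "cm k M \<Longrightarrow> \<exists>M'. cm (dk k) M' \<and> qev M' = qNeg (qev M)"
proof (induction rule: cm.induct)
  case (cmL L) then show ?case using neg_lit cm.cmL by (metis dk.simps(1))
next
  case (cmA k A k' B)
  then obtain A' B' where "cm (dk k) A'" "qev A' = qNeg (qev A)" "cm (dk k') B'" "qev B' = qNeg (qev B)"
    by blast
  moreover have "dk k \<noteq> KO" using cmA(2) by (cases k) auto
  ultimately show ?case by (auto simp: dm2 intro!: exI[of _ "LOr A' B'"] cm.intros)
next
  case (cmO k A k' B)
  then obtain A' B' where "cm (dk k) A'" "qev A' = qNeg (qev A)" "cm (dk k') B'" "qev B' = qNeg (qev B)"
    by blast
  moreover have "dk k \<noteq> KA" using cmO(2) by (cases k) auto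
  ultimately show ?case by (auto simp: dm1 intro!: exI[of _ "LAnd A' B'"] cm.intros)
qed

lemma mandT: "cm k M \<Longrightarrow> tt kk \<Longrightarrow> \<exists>M'. cm k M' \<and> qev M' = qAnd (qev M) (qev kk)"
proof (induction arbitrary: kk rule: cm.induct)
  case (cmL L)
  note K = tt_TTq[OF cmL(2)]
  from cmL(1) show ?case
  proof (cases rule: islit_cases)
    case (1 a R Q)
    obtain r where r: "tt r" "qev r = qAnd (qev R) (qev kk)" using ttand[OF 1(1) cmL(2)] by blast
    have "qAnd (qev L) (qev kk) = qOr (qAnd (qAt a) (qev r)) (qAnd (qev Q) qF)"
      using K r by (simp add: 1 ld f7 f6)
    then show ?thesis using 1 r cmL.prems by (intro exI[of _ "LOr (LAnd (At a) r) (LAnd Q Ff)"]) (auto intro: cm.intros islit.intros)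
  next
    case (2 a R Q)
    obtain r where r: "tt r" "qev r = qAnd (qev R) (qev kk)" using ttand[OF 2(1) cmL(2)] by blast
    have "qAnd (qev L) (qev kk) = qOr (qAnd (qNeg (qAt a)) (qev r)) (qAnd (qev Q) qF)"
      using K r by (simp add: 2 ld f7 f6)
    then show ?thesis using 2 r by (intro exI[of _ "LOr (LAnd (Neg (At a)) r) (LAnd Q Ff)"]) (auto intro: cm.intros islit.intros)
  qed
next
  case (cmA k A k' B)
  then obtain B' where "cm k' B'" "qev B' = qAnd (qev B) (qev kk)" by blast
  then show ?case using cmA by (auto simp: f7 intro!: exI[of _ "LAnd A B'"] cm.intros)
next
  case (cmO k A k' B)
  then obtain A' B' where "cm k A'" "qev A' = qAnd (qev A) (qev kk)" "cm k' B'" "qev B' = qAnd (qev B) (qev kk)"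
    by blast
  then show ?case using cmO tt_TTq[OF cmO(6)] by (auto simp: ld intro!: exI[of _ "LOr A' B'"] cm.intros)
qed

lemma morF: "cm k M \<Longrightarrow> tt w \<Longrightarrow> \<exists>M'. cm k M' \<and> qev M' = qOr (qev M) (qAnd (qev w) qF)"
proof (induction arbitrary: w rule: cm.induct)
  case (cmL L)
  from cmL(1) obtain a R Q l where RQ: "tt R" "tt Q" and L: "L = LOr (LAnd l R) (LAnd Q Ff)"
    and l: "l = At a \<or> l = Neg (At a)"
    by (cases rule: islit_cases) auto
  obtain r where r: "tt r" "qev r = qAnd (qev Q) (qev w)" using ttand[OF RQ(2) cmL(2)] by blast
  have "qOr (qev L) (qAnd (qev w) qF) = qOr (qAnd (qev l) (qev R)) (qAnd (qev r) qF)"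
    using r tt_TTq[OF RQ(2)] by (simp add: L or_assoc lg f7)
  then show ?case using RQ r l by (intro exI[of _ "LOr (LAnd l R) (LAnd r Ff)"]) (auto intro: cm.intros islit.intros)
next
  case (cmA k A k' B)
  then obtain A' B' where "cm k A'" "qev A' = qOr (qev A) (qAnd (qev w) qF)" "cm k' B'" "qev B' = qOr (qev B) (qAnd (qev w) qF)"
    by blast
  then show ?case using cmA by (auto simp: f10 intro!: exI[of _ "LAnd A' B'"] cm.intros)
next
  case (cmO k A k' B)
  then obtain B' where "cm k' B'" "qev B' = qOr (qev B) (qAnd (qev w) qF)" by blast
  then show ?case using cmO by (auto simp: or_assoc intro!: exI[of _ "LOr A B'"] cm.intros)
qed

lemma litT_pos: "tt R \<Longrightarrow> tt Q \<Longrightarrow> qOr (qev (LOr (LAnd (At a) R) (LAnd Q Ff))) qT = qev (LOr (LAnd (At a) R) Q)"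
proof -
  assume a: "tt R" "tt Q"
  have "qOr (qev (LOr (LAnd (At a) R) (LAnd Q Ff))) qT = qOr (qAnd (qAt a) (qev R)) (qOr (qAnd (qev Q) qF) qT)"
    by (simp add: or_assoc)
  also have "... = qOr (qAnd (qAt a) (qev R)) (qev Q)"
    by (simp only: lg[OF tt_TTq[OF a(2)]] andT)
  finally show ?thesis by simp
qed

lemma litT: "islit L \<Longrightarrow> \<exists>r. tt r \<and> qev r = qOr (qev L) qT"
proof -
  assume "islit L"
  then show ?thesis
  proof (cases rule: islit_cases)
    case (1 a R Q) then show ?thesis using litT_pos[of R Q a]
      by (intro exI[of _ "LOr (LAnd (At a) R) Q"]) (auto intro: tt.intros)
  next
    case (2 a R Q)
    have "qNeg (qev L) = qev (LOr (LAnd (At a) Q) (LAnd R Ff))" unfolding 2(3) by (rule neg_lit_aux2[OF 2(1,2)])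
    then have "qOr (qev L) qT = qOr (qev (LOr (LAnd (At a) Q) (LAnd R Ff))) qT" by (metis f8d)
    then show ?thesis using litT_pos[of Q R a] 2
      by (intro exI[of _ "LOr (LAnd (At a) Q) R"]) (auto intro: tt.intros)
  qed
qed

lemma cm_lit: "cm KL L \<Longrightarrow> islit L"
  by (cases rule: cm.cases) auto

lemma orT_gen: "cm k M \<Longrightarrow> tt kk \<Longrightarrow> tt w \<Longrightarrow>
   \<exists>r. tt r \<and> qev r = qOr (qOr (qAnd (qev M) (qev kk)) (qAnd (qev w) qF)) qT"
proof (induction arbitrary: kk w rule: cm.induct)
  case (cmL L)
  obtain M1 where M1: "cm KL M1" "qev M1 = qAnd (qev L) (qev kk)" using mandT[OF cm.cmL[OF cmL(1)] cmL(2)] by blast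
  obtain M2 where M2: "cm KL M2" "qev M2 = qOr (qev M1) (qAnd (qev w) qF)" using morF[OF M1(1) cmL(3)] by blast
  obtain r where "tt r" "qev r = qOr (qev M2) qT" using litT[OF cm_lit[OF M2(1)]] by blast
  then show ?case using M1 M2 by auto
next
  case (cmA k A k' B)
  obtain rB where rB: "tt rB" "qev rB = qOr (qOr (qAnd (qev B) (qev kk)) (qAnd (qev w) qF)) qT"
    using cmA.IH(2)[OF cmA.prems] by blast
  obtain rA where rA: "tt rA" "qev rA = qOr (qOr (qAnd (qev A) (qev rB)) (qAnd (qev w) qF)) qT"
    using cmA.IH(1)[OF rB(1) cmA.prems(2)] by blast
  have TB: "TTq (qev rB)" using tt_TTq[OF rB(1)] .
  have "qOr (qOr (qAnd (qev (LAnd A B)) (qev kk)) (qAnd (qev w) qF)) qT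
      = qOr (qOr (qAnd (qev A) (qAnd (qev B) (qev kk))) (qAnd (qev w) qF)) qT" by (simp add: f7)
  also have "... = qOr (qAnd (qOr (qev A) (qAnd (qev w) qF)) (qOr (qAnd (qev B) (qev kk)) (qAnd (qev w) qF))) qT"
    by (simp only: f10)
  also have "... = qOr (qAnd (qOr (qev A) (qAnd (qev w) qF)) (qev rB)) qT"
    by (subst hi) (simp only: rB(2))
  also have "... = qOr (qOr (qAnd (qev A) (qev rB)) (qAnd (qev w) qF)) qT"
    by (simp only: ld[OF TB] le)
  finally show ?case using rA by auto
next
  case (cmO k A k' B)
  obtain rB where rB: "tt rB" "qev rB = qOr (qOr (qAnd (qev B) (qev kk)) (qAnd (qev w) qF)) qT"
    using cmO.IH(2)[OF cmO.prems] by blast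
  obtain rA where rA: "tt rA" "qev rA = qOr (qOr (qAnd (qev A) (qev kk)) (qAnd (qev rB) qF)) qT"
    using cmO.IH(1)[OF cmO.prems(1) rB(1)] by blast
  have TB: "TTq (qev rB)" using tt_TTq[OF rB(1)] .
  have TK: "TTq (qev kk)" using tt_TTq[OF cmO.prems(1)] .
  have "qOr (qOr (qAnd (qev (LOr A B)) (qev kk)) (qAnd (qev w) qF)) qT
      = qOr (qAnd (qev A) (qev kk)) (qOr (qOr (qAnd (qev B) (qev kk)) (qAnd (qev w) qF)) qT)"
    by (simp only: qev.simps ld[OF TK] or_assoc)
  also have "... = qOr (qAnd (qev A) (qev kk)) (qev rB)" by (simp only: rB(2))
  also have "... = qOr (qAnd (qev A) (qev kk)) (qOr (qAnd (qev rB) qF) qT)"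
    using TB h2[of "qev rB"] unfolding TTq_def by metis
  also have "... = qOr (qOr (qAnd (qev A) (qev kk)) (qAnd (qev rB) qF)) qT" by (simp only: or_assoc)
  finally show ?case using rA by auto
qed

lemma orT_cm: "cm k M \<Longrightarrow> \<exists>r. tt r \<and> qev r = qOr (qev M) qT"
  using orT_gen[of k M Tt Tt] by (simp add: andT f4 f5 tt.intros)

lemma mconj: "cm k A \<Longrightarrow> cm k' B \<Longrightarrow> \<exists>M. cm KA M \<and> qev M = qAnd (qev A) (qev B)"
proof (induction arbitrary: B k' rule: cm.induct)
  case (cmL L) then show ?case by (intro exI[of _ "LAnd L B"]) (auto intro: cm.intros)
next
  case (cmA k A1 k2 A2)
  obtain M where "cm KA M" "qev M = qAnd (qev A2) (qev B)" using cmA.IH(2)[OF cmA.prems] by blast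
  then show ?case using cmA by (intro exI[of _ "LAnd A1 M"]) (auto simp: f7 intro: cm.intros)
next
  case (cmO k A1 k2 A2)
  then show ?case by (intro exI[of _ "LAnd (LOr A1 A2) B"]) (auto intro: cm.intros)
qed

lemma canon_neg: "canon t \<Longrightarrow> \<exists>c. canon c \<and> qev c = qNeg (qev t)"
proof -
  assume "canon t"
  then consider (T) "tt t" | (F) p where "t = LAnd p Ff" "tt p" | (M) p M k where "t = LAnd p M" "tt p" "cm k M"
    unfolding canon_def ffc_def by blast
  then show ?thesis
  proof cases
    case T then show ?thesis using lb[OF tt_TTq[OF T]]
      by (intro exI[of _ "LAnd t Ff"]) (auto simp: canon_def ffc_def)
  next
    case F then show ?thesis using lc[OF tt_TTq[OF F(2)]]
      by (intro exI[of _ p]) (auto simp: canon_def)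
  next
    case M
    obtain M' where M': "cm (dk k) M'" "qev M' = qNeg (qev M)" using neg_cm[OF M(3)] by blast
    have "qNeg (qev t) = qOr (qAnd (qev p) qF) (qNeg (qev M))"
      by (simp add: M dm2 lb[OF tt_TTq[OF M(2)]])
    also have "... = qAnd (qev p) (qev M')" by (simp add: lg[OF tt_TTq[OF M(2)]] M')
    finally show ?thesis using M M' by (intro exI[of _ "LAnd p M'"]) (auto simp: canon_def)
  qed
qed

lemma canon_cases:
  assumes "canon t"
  obtains (T) "tt t" | (F) p where "t = LAnd p Ff" "tt p" | (M) p M k where "t = LAnd p M" "tt p" "cm k M"
  using assms unfolding canon_def ffc_def by blast

lemma canon_conj: "canon t \<Longrightarrow> canon u \<Longrightarrow> \<exists>c. canon c \<and> qev c = qAnd (qev t) (qev u)"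
proof -
  assume t: "canon t" and u: "canon u"
  from t show ?thesis
  proof (cases rule: canon_cases)
    case T
    from u show ?thesis
    proof (cases rule: canon_cases)
      case T2: T
      obtain r where "tt r" "qev r = qAnd (qev t) (qev u)" using ttand[OF T T2] by blast
      then show ?thesis by (auto simp: canon_def)
    next
      case (F q)
      obtain r where "tt r" "qev r = qAnd (qev t) (qev q)" using ttand[OF T F(2)] by blast
      then show ?thesis using F by (intro exI[of _ "LAnd r Ff"]) (auto simp: canon_def ffc_def f7)
    next
      case (M q N k)
      obtain r where "tt r" "qev r = qAnd (qev t) (qev q)" using ttand[OF T M(2)] by blast
      then show ?thesis using M by (intro exI[of _ "LAnd r N"]) (auto simp: canon_def f7)
    qed
  next
    case (F p)
    then show ?thesis using t by (intro exI[of _ t]) (auto simp: le)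
  next
    case (M p N k)
    from u show ?thesis
    proof (cases rule: canon_cases)
      case T2: T
      obtain N' where "cm k N'" "qev N' = qAnd (qev N) (qev u)" using mandT[OF M(3) T2] by blast
      then show ?thesis using M by (intro exI[of _ "LAnd p N'"]) (auto simp: canon_def f7)
    next
      case (F q)
      obtain N' where N': "cm k N'" "qev N' = qAnd (qev N) (qev q)" using mandT[OF M(3) F(2)] by blast
      obtain r where r: "tt r" "qev r = qOr (qev N') qT" using orT_cm[OF N'(1)] by blast
      obtain s where s: "tt s" "qev s = qAnd (qev p) (qev r)" using ttand[OF M(2) r(1)] by blast
      have "qAnd (qev t) (qev u) = qAnd (qev p) (qAnd (qev N') qF)" by (simp add: M F N' f7)
      also have "... = qAnd (qev s) qF" by (subst h1) (simp add: r s f7)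
      finally show ?thesis using s by (intro exI[of _ "LAnd s Ff"]) (auto simp: canon_def ffc_def)
    next
      case M2: (M q N2 k2)
      obtain N' where N': "cm k N'" "qev N' = qAnd (qev N) (qev q)" using mandT[OF M(3) M2(2)] by blast
      obtain N3 where N3: "cm KA N3" "qev N3 = qAnd (qev N') (qev N2)" using mconj[OF N'(1) M2(3)] by blast
      have "qAnd (qev t) (qev u) = qAnd (qev p) (qev N3)" by (simp add: M M2 N' N3 f7)
      then show ?thesis using M N3 by (intro exI[of _ "LAnd p N3"]) (auto simp: canon_def)
    qed
  qed
qed

lemma normalize: "scl_term t \<Longrightarrow> closed t \<Longrightarrow> \<exists>c. canon c \<and> qev c = qev t"
proof (induction t)
  case Tt then show ?case by (intro exI[of _ Tt]) (auto simp: canon_def tt.intros)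
next
  case Ff then show ?case by (intro exI[of _ "LAnd Tt Ff"]) (auto simp: canon_def ffc_def tt.intros f4)
next
  case (At a)
  have "cm KL (LOr (LAnd (At a) Tt) (LAnd Tt Ff))" by (auto intro: cm.intros islit.intros tt.intros)
  then show ?case by (intro exI[of _ "LAnd Tt (LOr (LAnd (At a) Tt) (LAnd Tt Ff))"])
      (auto simp: canon_def tt.intros f4 andT f5)
next
  case (Neg t)
  then obtain c where "canon c" "qev c = qev t" by auto
  then show ?case using canon_neg by fastforce
next
  case (LAnd t u)
  then obtain c d where "canon c" "qev c = qev t" "canon d" "qev d = qev u" by auto
  then show ?case using canon_conj by fastforce
next
  case (LOr t u)
  then obtain c d where c: "canon c" "qev c = qev t" and d: "canon d" "qev d = qev u" by auto
  obtain c' where c': "canon c'" "qev c' = qNeg (qev c)" using canon_neg[OF c(1)] by blast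
  obtain d' where d': "canon d'" "qev d' = qNeg (qev d)" using canon_neg[OF d(1)] by blast
  obtain e where e: "canon e" "qev e = qAnd (qev c') (qev d')" using canon_conj[OF c'(1) d'(1)] by blast
  obtain e' where e': "canon e'" "qev e' = qNeg (qev e)" using canon_neg[OF e(1)] by blast
  show ?case using c d c' d' e e' by (intro exI[of _ e']) (simp add: f2)
qed auto


definition mul :: "'a tr \<Rightarrow> 'a tr \<Rightarrow> 'a tr" where "mul X Y = sub X Y (Lf False)"
definition add :: "'a tr \<Rightarrow> 'a tr \<Rightarrow> 'a tr" where "add X Y = sub X (Lf True) Y"
definition sw :: "'a tr \<Rightarrow> 'a tr" where "sw X = sub X (Lf False) (Lf True)"

primrec hasT :: "'a tr \<Rightarrow> bool" where
  "hasT (Lf b) = b" | "hasT (Nd a l r) = (hasT l \<or> hasT r)"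
primrec hasF :: "'a tr \<Rightarrow> bool" where
  "hasF (Lf b) = (\<not> b)" | "hasF (Nd a l r) = (hasF l \<or> hasF r)"

definition mixed :: "'a tr \<Rightarrow> bool" where "mixed X \<longleftrightarrow> hasT X \<and> hasF X"

lemma leaf_ex: "hasT X \<or> hasF X" by (induction X) auto

lemma hasT_sub: "hasT (sub X A B) \<longleftrightarrow> (hasT X \<and> hasT A) \<or> (hasF X \<and> hasT B)"
  by (induction X) auto
lemma hasF_sub: "hasF (sub X A B) \<longleftrightarrow> (hasT X \<and> hasF A) \<or> (hasF X \<and> hasF B)"
  by (induction X) auto

lemma hasT_mul[simp]: "hasT (mul X Y) \<longleftrightarrow> hasT X \<and> hasT Y" by (simp add: mul_def hasT_sub)
lemma hasF_mul[simp]: "hasF (mul X Y) \<longleftrightarrow> hasF X \<or> (hasT X \<and> hasF Y)"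
  by (auto simp add: mul_def hasF_sub)
lemma hasT_add[simp]: "hasT (add X Y) \<longleftrightarrow> hasT X \<or> (hasF X \<and> hasT Y)"
  by (auto simp add: add_def hasT_sub)
lemma hasF_add[simp]: "hasF (add X Y) \<longleftrightarrow> hasF X \<and> hasF Y" by (simp add: add_def hasF_sub)
lemma hasT_sw[simp]: "hasT (sw X) = hasF X" by (simp add: sw_def hasT_sub)
lemma hasF_sw[simp]: "hasF (sw X) = hasT X" by (simp add: sw_def hasF_sub)

lemma sub_noF: "\<not> hasF X \<Longrightarrow> sub X A B = sub X A C" by (induction X) auto
lemma sub_noT: "\<not> hasT X \<Longrightarrow> sub X A B = sub X C B" by (induction X) auto

lemma mul_assoc: "mul (mul X Y) Z = mul X (mul Y Z)" by (simp add: mul_def sub_assoc)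
lemma add_assoc: "add (add X Y) Z = add X (add Y Z)" by (simp add: add_def sub_assoc)
lemma sw_sw[simp]: "sw (sw X) = X" by (simp add: sw_def sub_assoc)
lemma sw_mul: "sw (mul X Y) = add (sw X) (sw Y)" by (simp add: sw_def mul_def add_def sub_assoc)
lemma sw_add: "sw (add X Y) = mul (sw X) (sw Y)" by (simp add: sw_def mul_def add_def sub_assoc)
lemma size_sw[simp]: "size (sw X) = size X" by (induction X) (auto simp: sw_def)
lemma sw_inj: "sw X = sw Y \<Longrightarrow> X = Y" by (metis sw_sw)

lemma mul_noT: "\<not> hasT X \<Longrightarrow> mul X Y = X"
  unfolding mul_def by (induction X) auto
lemma add_noF: "\<not> hasF X \<Longrightarrow> add X Y = X"
  unfolding add_def by (induction X) auto
lemma add_noT: "\<not> hasT C \<Longrightarrow> add C D = mul (sw C) D"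
proof -
  assume "\<not> hasT C"
  then have "sub C (Lf True) D = sub C (Lf False) D" by (rule sub_noT)
  then show ?thesis unfolding add_def mul_def sw_def by (simp add: sub_assoc)
qed
lemma mul_Tr[simp]: "mul X (Lf True) = X" by (simp add: mul_def)
lemma mul_T[simp]: "mul (Lf True) Y = Y" by (simp add: mul_def)
lemma mul_F[simp]: "mul (Lf False) Y = Lf False" by (simp add: mul_def)
lemma mul_Nd[simp]: "mul (Nd a l r) Y = Nd a (mul l Y) (mul r Y)" by (simp add: mul_def)
lemma add_T[simp]: "add (Lf True) Y = Lf True" by (simp add: add_def)
lemma add_F[simp]: "add (Lf False) Y = Y" by (simp add: add_def)
lemma add_Nd[simp]: "add (Nd a l r) Y = Nd a (add l Y) (add r Y)" by (simp add: add_def)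

lemma chain: "hasT A \<Longrightarrow> hasT C \<Longrightarrow> hasT B \<Longrightarrow> hasT D \<Longrightarrow> mul A B = mul C D \<Longrightarrow>
   (\<exists>E. B = mul E D) \<or> (\<exists>E. D = mul E B)"
proof (induction A arbitrary: C)
  case (Lf b)
  then show ?case by auto
next
  case (Nd a A1 A2)
  show ?case
  proof (cases C)
    case (Lf c)
    then have "c" using Nd.prems by (cases c) auto
    then have "D = mul (Nd a A1 A2) B" using Nd.prems Lf by simp
    then show ?thesis by (intro disjI2 exI[of _ "Nd a A1 A2"])
  next
    case (Nd c C1 C2)
    with Nd.prems have e1: "mul A1 B = mul C1 D" and e2: "mul A2 B = mul C2 D" by auto
    show ?thesis
    proof (cases "hasT A1")
      case True
      then have "hasT C1" using e1 Nd.prems by (metis hasT_mul mul_noT)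
      then show ?thesis using Nd.IH(1)[OF True _ Nd.prems(3,4) e1] by blast
    next
      case False
      then have A2: "hasT A2" using Nd.prems by auto
      then have "hasT C2" using e2 Nd.prems by (metis hasT_mul mul_noT)
      then show ?thesis using Nd.IH(2)[OF A2 _ Nd.prems(3,4) e2] by blast
    qed
  qed
qed

lemma size_mul_ge: "hasT X \<Longrightarrow> size (mul X B) \<ge> size B"
  by (induction X) auto
lemma size_mul_gt: "hasT X \<Longrightarrow> X \<noteq> Lf True \<Longrightarrow> size (mul X B) > size B"
proof (cases X)
  case (Nd a l r)
  assume "hasT X"
  then show ?thesis using Nd size_mul_ge[of l B] size_mul_ge[of r B] by auto
qed auto

lemma mul_self: "hasT B \<Longrightarrow> B = mul C B \<Longrightarrow> C = Lf True"
  by (metis hasT_mul less_not_refl mul_noT size_mul_gt)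

lemma cancel: "hasT B \<Longrightarrow> mul A B = mul C B \<Longrightarrow> A = C"
proof (induction A arbitrary: C)
  case (Lf b)
  show ?case
  proof (cases b)
    case True then show ?thesis using Lf mul_self by fastforce
  next
    case False
    show ?thesis
    proof (cases C)
      case (Lf c) then show ?thesis using Lf.prems False by (cases c) auto
    next
      case (Nd c C1 C2) then show ?thesis using Lf.prems False by auto
    qed
  qed
next
  case (Nd a A1 A2)
  show ?case
  proof (cases C)
    case (Lf c)
    then show ?thesis using Nd.prems mul_self[of B "Nd a A1 A2"] by (cases c) auto
  next
    case (Nd c C1 C2)
    then show ?thesis using Nd.prems Nd.IH by auto
  qed
qed

lemma lemI: "mul A B = add C D \<Longrightarrow> hasT A \<Longrightarrow> hasF A \<Longrightarrow> \<not> hasT C \<Longrightarrow> mixed B \<Longrightarrow> mixed D \<Longrightarrow>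
  size B < size D"
proof -
  assume e: "mul A B = add C D" and A: "hasT A" "hasF A" and C: "\<not> hasT C" and BD: "mixed B" "mixed D"
  have e': "mul A B = mul (sw C) D" using e add_noT[OF C] by simp
  have sC: "hasT (sw C)" using C leaf_ex[of C] by simp
  from chain[OF A(1) sC _ _ e'] BD consider (a) E where "B = mul E D" | (b) E where "D = mul E B"
    by (auto simp: mixed_def)
  then show ?thesis
  proof cases
    case a
    then have "mul (mul A E) D = mul (sw C) D" using e' by (simp add: mul_assoc)
    then have "mul A E = sw C" using cancel BD by (auto simp: mixed_def)
    then show ?thesis using A C by (metis hasF_mul hasF_sw)
  next
    case b
    show ?thesis
    proof (cases "E = Lf True")
      case True
      then have "mul A B = mul (sw C) B" using e' b by simp
      then have "A = sw C" using cancel BD by (auto simp: mixed_def)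
      then show ?thesis using A C by simp
    next
      case False
      have "hasT E" using b BD by (auto simp: mixed_def)
      then show ?thesis using size_mul_gt[OF _ False] b by auto
    qed
  qed
qed

lemma mixed_sw[simp]: "mixed (sw X) = mixed X" by (auto simp: mixed_def)

lemma lemII: "mul A B = add C D \<Longrightarrow> \<not> hasF A \<Longrightarrow> mixed C \<Longrightarrow> mixed B \<Longrightarrow> mixed D \<Longrightarrow>
  size D < size B"
proof -
  assume e: "mul A B = add C D" and A: "\<not> hasF A" and m: "mixed C" "mixed B" "mixed D"
  have "mul (sw C) (sw D) = add (sw A) (sw B)" by (metis e sw_add sw_mul)
  from lemI[OF this] A m have "size (sw D) < size (sw B)" by (auto simp: mixed_def)
  then show ?thesis by simp
qed

lemma impossible: "mixed A \<Longrightarrow> mixed B \<Longrightarrow> mixed C \<Longrightarrow> mixed D \<Longrightarrow> mul A B = add C D \<Longrightarrow> False"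
proof (induction A arbitrary: C)
  case (Lf b) then show ?case by (cases b) (auto simp: mixed_def)
next
  case (Nd a A1 A2)
  show ?case
  proof (cases C)
    case (Lf c) then show ?thesis using Nd.prems by (cases c) (auto simp: mixed_def)
  next
    case (Nd c C1 C2)
    with Nd.prems have e1: "mul A1 B = add C1 D" and e2: "mul A2 B = add C2 D" by auto
    have tA: "hasT A1" "hasT A2"
      using e1 e2 Nd.prems leaf_ex[of C1] leaf_ex[of C2]
      by (metis hasT_add mul_noT mixed_def)+
    have fC: "hasF C1" "hasF C2"
      using e1 e2 Nd.prems tA leaf_ex[of A1] leaf_ex[of A2]
      by (metis hasF_mul add_noF mixed_def)+
    have IH1: "hasF A1 \<Longrightarrow> hasT C1 \<Longrightarrow> False"
      using Nd.IH(1)[OF _ Nd.prems(2) _ Nd.prems(4) e1] tA fC by (auto simp: mixed_def)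
    have IH2: "hasF A2 \<Longrightarrow> hasT C2 \<Longrightarrow> False"
      using Nd.IH(2)[OF _ Nd.prems(2) _ Nd.prems(4) e2] tA fC by (auto simp: mixed_def)
    have I1: "hasF A1 \<Longrightarrow> \<not> hasT C1 \<Longrightarrow> size B < size D"
      using lemI[OF e1] tA Nd.prems by auto
    have I2: "hasF A2 \<Longrightarrow> \<not> hasT C2 \<Longrightarrow> size B < size D"
      using lemI[OF e2] tA Nd.prems by auto
    have II1: "hasT C1 \<Longrightarrow> \<not> hasF A1 \<Longrightarrow> size D < size B"
      using lemII[OF e1] fC Nd.prems by (auto simp: mixed_def)
    have II2: "hasT C2 \<Longrightarrow> \<not> hasF A2 \<Longrightarrow> size D < size B"
      using lemII[OF e2] fC Nd.prems by (auto simp: mixed_def)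
    have "hasF A1 \<or> hasF A2" using Nd.prems by (auto simp: mixed_def)
    moreover have "hasT C1 \<or> hasT C2" using Nd.prems Nd by (auto simp: mixed_def)
    ultimately show False using IH1 IH2 I1 I2 II1 II2 by fastforce
  qed
qed

definition pdm :: "'a tr \<Rightarrow> bool" where "pdm X \<longleftrightarrow> (\<exists>A B. mixed A \<and> mixed B \<and> X = mul A B)"
definition pda :: "'a tr \<Rightarrow> bool" where "pda X \<longleftrightarrow> (\<exists>A B. mixed A \<and> mixed B \<and> X = add A B)"
definition pf :: "'a tr \<Rightarrow> bool" where
  "pf X \<longleftrightarrow> \<not> (\<exists>P Z. \<not> hasF P \<and> P \<noteq> Lf True \<and> X = mul P Z)"

definition LT :: "'a tr \<Rightarrow> bool" where
  "LT X \<longleftrightarrow> (\<exists>a R Q. \<not> hasF R \<and> \<not> hasT Q \<and> (X = Nd a R Q \<or> X = Nd a Q R))"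

lemma LT_mixed: "LT X \<Longrightarrow> mixed X"
  unfolding LT_def mixed_def using leaf_ex by fastforce

lemma LT_not_pdm: "LT X \<Longrightarrow> \<not> pdm X"
proof
  assume "LT X" "pdm X"
  then obtain a R Q A B where RQ: "\<not> hasF R" "\<not> hasT Q" "X = Nd a R Q \<or> X = Nd a Q R"
    and AB: "mixed A" "mixed B" "X = mul A B" unfolding LT_def pdm_def by blast
  obtain b A1 A2 where A: "A = Nd b A1 A2" using AB by (cases A) (auto simp: mixed_def)
  have "hasT A1 \<or> hasT A2" using AB A by (auto simp: mixed_def)
  then show False using RQ AB A by (auto simp: mixed_def)
qed

lemma LT_not_pda: "LT X \<Longrightarrow> \<not> pda X"
proof
  assume "LT X" "pda X"
  then obtain a R Q A B where RQ: "\<not> hasF R" "\<not> hasT Q" "X = Nd a R Q \<or> X = Nd a Q R"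
    and AB: "mixed A" "mixed B" "X = add A B" unfolding LT_def pda_def by blast
  obtain b A1 A2 where A: "A = Nd b A1 A2" using AB by (cases A) (auto simp: mixed_def)
  have "hasF A1 \<or> hasF A2" using AB A by (auto simp: mixed_def)
  then show False using RQ AB A by (auto simp: mixed_def)
qed

lemma LT_pf: "LT X \<Longrightarrow> pf X"
proof (unfold pf_def, rule notI)
  assume "LT X" "\<exists>P Z. \<not> hasF P \<and> P \<noteq> Lf True \<and> X = mul P Z"
  then obtain a R Q P Z where RQ: "\<not> hasF R" "\<not> hasT Q" "X = Nd a R Q \<or> X = Nd a Q R"
    and P: "\<not> hasF P" "P \<noteq> Lf True" "X = mul P Z" unfolding LT_def by blast
  obtain b P1 P2 where P': "P = Nd b P1 P2" using P by (cases P) auto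
  have "hasT P1" "hasT P2" using P P' leaf_ex[of P1] leaf_ex[of P2] by auto
  then show False using RQ P P' leaf_ex[of Z] by auto
qed

lemma mixed_mul: "mixed A \<Longrightarrow> mixed B \<Longrightarrow> mixed (mul A B)" by (auto simp: mixed_def)
lemma mixed_add: "mixed A \<Longrightarrow> mixed B \<Longrightarrow> mixed (add A B)" by (auto simp: mixed_def)

lemma pf_mul: "mixed A \<Longrightarrow> pf A \<Longrightarrow> hasT B \<Longrightarrow> pf (mul A B)"
proof (unfold pf_def, rule notI)
  assume A: "mixed A" "\<not> (\<exists>P Z. \<not> hasF P \<and> P \<noteq> Lf True \<and> A = mul P Z)" and B: "hasT B"
    and "\<exists>P Z. \<not> hasF P \<and> P \<noteq> Lf True \<and> mul A B = mul P Z"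
  then obtain P Z where P: "\<not> hasF P" "P \<noteq> Lf True" "mul A B = mul P Z" by blast
  have tP: "hasT P" using P leaf_ex[of P] by auto
  have tZ: "hasT Z" using P A B by (metis hasT_mul mixed_def)
  from chain[OF _ tP B tZ P(3)] A consider (a) E where "B = mul E Z" | (b) E where "Z = mul E B"
    by (auto simp: mixed_def)
  then show False
  proof cases
    case a
    then have "mul (mul A E) Z = mul P Z" using P by (simp add: mul_assoc)
    then have "mul A E = P" using cancel tZ by blast
    then show False using A P by (auto simp: mixed_def)
  next
    case b
    then have "mul A B = mul (mul P E) B" using P by (simp add: mul_assoc)
    then have "A = mul P E" using cancel B by blast
    then show False using A P by blast
  qed
qed

lemma sw_mul_allT: "\<not> hasF P \<Longrightarrow> sw (mul P Z) = mul P (sw Z)"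
proof -
  assume "\<not> hasF P"
  then have "sub P (sw Z) (Lf True) = sub P (sw Z) (Lf False)" by (rule sub_noF)
  then show ?thesis unfolding sw_def mul_def by (simp add: sub_assoc)
qed

lemma pf_sw: "pf (sw X) \<longleftrightarrow> pf X"
  unfolding pf_def by (metis sw_mul_allT sw_sw)

lemma pf_add: "mixed A \<Longrightarrow> pf A \<Longrightarrow> hasF B \<Longrightarrow> pf (add A B)"
  by (metis hasT_sw mixed_sw pf_mul pf_sw sw_add)

lemma pdm_sw: "pdm (sw X) \<longleftrightarrow> pda X"
  unfolding pdm_def pda_def by (metis mixed_sw sw_add sw_mul sw_sw)

lemma uniq_mul: "mul A B = mul A' B' \<Longrightarrow> mixed A \<Longrightarrow> mixed A' \<Longrightarrow> mixed B \<Longrightarrow> mixed B' \<Longrightarrow>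
  \<not> pdm A \<Longrightarrow> \<not> pdm A' \<Longrightarrow> pf B \<Longrightarrow> pf B' \<Longrightarrow> A = A' \<and> B = B'"
proof -
  have main: "A = A' \<and> B = B'" if e: "mul A B = mul A' B'" and m: "mixed A" "mixed A'" "mixed B" "mixed B'"
    and d: "\<not> pdm A'" and p: "pf B" and E: "B = mul E B'" for A A' B B' E
  proof -
    have "mul (mul A E) B' = mul A' B'" using e E by (simp add: mul_assoc)
    then have A': "A' = mul A E" using cancel m by (auto simp: mixed_def)
    consider "E = Lf True" | "\<not> hasT E" | "hasT E \<and> \<not> hasF E \<and> E \<noteq> Lf True" | "mixed E"
      by (auto simp: mixed_def)
    then show ?thesis
    proof cases
      case 1 then show ?thesis using A' E by simp
    next
      case 2 then show ?thesis using E m mul_noT by (metis mixed_def)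
    next
      case 3 then show ?thesis using p E unfolding pf_def by blast
    next
      case 4 then show ?thesis using d A' m unfolding pdm_def by blast
    qed
  qed
  assume e: "mul A B = mul A' B'" and m: "mixed A" "mixed A'" "mixed B" "mixed B'"
    and d: "\<not> pdm A" "\<not> pdm A'" and p: "pf B" "pf B'"
  from chain[OF _ _ _ _ e] m consider (a) E where "B = mul E B'" | (b) E where "B' = mul E B"
    by (auto simp: mixed_def)
  then show ?thesis
  proof cases
    case a then show ?thesis using main[OF e m d(2) p(1) a] by auto
  next
    case b then show ?thesis using main[OF e[symmetric] m(2,1,4,3) d(1) p(2) b] by auto
  qed
qed

lemma uniq_add: "add A B = add A' B' \<Longrightarrow> mixed A \<Longrightarrow> mixed A' \<Longrightarrow> mixed B \<Longrightarrow> mixed B' \<Longrightarrow>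
  \<not> pda A \<Longrightarrow> \<not> pda A' \<Longrightarrow> pf B \<Longrightarrow> pf B' \<Longrightarrow> A = A' \<and> B = B'"
proof -
  assume e: "add A B = add A' B'" and m: "mixed A" "mixed A'" "mixed B" "mixed B'"
    and d: "\<not> pda A" "\<not> pda A'" and p: "pf B" "pf B'"
  have "mul (sw A) (sw B) = mul (sw A') (sw B')" by (metis e sw_add)
  from uniq_mul[OF this] m d p have "sw A = sw A' \<and> sw B = sw B'"
    by (simp add: pdm_sw pf_sw)
  then show ?thesis using sw_inj by blast
qed

lemma prefix_uniq: "\<not> hasF P \<Longrightarrow> \<not> hasF P' \<Longrightarrow> pf Z \<Longrightarrow> pf Z' \<Longrightarrow> mul P Z = mul P' Z' \<Longrightarrow>
  P = P' \<and> Z = Z'"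
proof (induction P arbitrary: P')
  case (Lf b)
  then have b: "b" by simp
  show ?case
  proof (cases P')
    case (Lf c) then show ?thesis using Lf.prems b by auto
  next
    case (Nd c l r) then show ?thesis using Lf.prems b unfolding pf_def by (metis mul_T tr.distinct(1))
  qed
next
  case (Nd a l r)
  show ?case
  proof (cases P')
    case (Lf c)
    then have c: "c" using Nd.prems by simp
    then show ?thesis using Nd.prems Lf unfolding pf_def by (metis mul_T tr.distinct(1))
  next
    case (Nd c l' r') then show ?thesis using Nd.prems Nd.IH by auto
  qed
qed

lemma allT_F_inj: "\<not> hasF P \<Longrightarrow> \<not> hasF P' \<Longrightarrow> mul P (Lf False) = mul P' (Lf False) \<Longrightarrow> P = P'"
proof (induction P arbitrary: P')
  case (Lf b) then show ?case by (cases P') auto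
next
  case (Nd a l r) then show ?case by (cases P') auto
qed


abbreviation ev0 :: "'a trm \<Rightarrow> 'a tr" where "ev0 \<equiv> ev (\<lambda>_. Lf True)"

lemma ev_LAnd: "ev \<rho> (LAnd t u) = mul (ev \<rho> t) (ev \<rho> u)" by (simp add: mul_def)
lemma ev_LOr: "ev \<rho> (LOr t u) = add (ev \<rho> t) (ev \<rho> u)" by (simp add: add_def)
declare ev.simps(6,7)[simp del]
declare ev_LAnd[simp] ev_LOr[simp] add_noF[simp]

lemma tt_ev: "tt p \<Longrightarrow> \<not> hasF (ev0 p)"
proof (induction rule: tt.induct)
  case (tt_N p1 p2 a)
  then show ?case by (simp add: ev_LAnd ev_LOr add_noF)
qed simp

lemma tt_ev_N: "tt p1 \<Longrightarrow> ev0 (LOr (LAnd (At a) p1) p2) = Nd a (ev0 p1) (ev0 p2)"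
  using tt_ev[of p1] by (simp add: ev_LAnd ev_LOr add_noF)

lemma tt_inj: "tt p \<Longrightarrow> tt q \<Longrightarrow> ev0 p = ev0 q \<Longrightarrow> p = q"
proof (induction arbitrary: q rule: tt.induct)
  case tt_T
  from tt_T.prems show ?case by (cases rule: tt.cases) (auto simp: tt_ev_N)
next
  case (tt_N p1 p2 a)
  from tt_N.prems show ?case
  proof (cases rule: tt.cases)
    case tt_T then show ?thesis using tt_N by (simp add: tt_ev_N)
  next
    case (tt_N q1 q2 b)
    then show ?thesis using tt_N.IH tt_N.hyps tt_N.prems tt_ev[of p1] tt_ev[of q1] by simp
  qed
qed

lemma noT_mulF: "\<not> hasT (mul X (Lf False))" by simp

lemma ev_litP: "tt R \<Longrightarrow> tt Q \<Longrightarrow> ev0 (LOr (LAnd (At a) R) (LAnd Q Ff)) = Nd a (ev0 R) (mul (ev0 Q) (Lf False))"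
  using tt_ev[of R] by (simp add: ev_LAnd ev_LOr add_noF)
lemma ev_litN: "tt R \<Longrightarrow> tt Q \<Longrightarrow> ev0 (LOr (LAnd (Neg (At a)) R) (LAnd Q Ff)) = Nd a (mul (ev0 Q) (Lf False)) (ev0 R)"
  using tt_ev[of R] by (simp add: ev_LAnd ev_LOr add_noF)

lemma lit_LT: assumes "islit L" shows "LT (ev0 L)"
  using assms
proof (cases rule: islit.cases)
  case (islitP R Q a)
  have "ev0 L = Nd a (ev0 R) (mul (ev0 Q) (Lf False))" unfolding islitP(1) by (rule ev_litP[OF islitP(2,3)])
  then show ?thesis using tt_ev[OF islitP(2)] unfolding LT_def
    by (intro exI[of _ a] exI[of _ "ev0 R"] exI[of _ "mul (ev0 Q) (Lf False)"]) simp
next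
  case (islitN R Q a)
  have "ev0 L = Nd a (mul (ev0 Q) (Lf False)) (ev0 R)" unfolding islitN(1) by (rule ev_litN[OF islitN(2,3)])
  then show ?thesis using tt_ev[OF islitN(2)] unfolding LT_def
    by (intro exI[of _ a] exI[of _ "ev0 R"] exI[of _ "mul (ev0 Q) (Lf False)"]) simp
qed

lemma hasF_mulF: "\<not> hasF P \<Longrightarrow> hasF (mul P (Lf False))"
  using leaf_ex[of P] by simp

lemma lit_ev: assumes "islit L" shows "\<exists>a R Q. tt R \<and> tt Q \<and>
   ((L = LOr (LAnd (At a) R) (LAnd Q Ff) \<and> ev0 L = Nd a (ev0 R) (mul (ev0 Q) (Lf False))) \<or>
    (L = LOr (LAnd (Neg (At a)) R) (LAnd Q Ff) \<and> ev0 L = Nd a (mul (ev0 Q) (Lf False)) (ev0 R)))"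
  using assms
proof (cases rule: islit.cases)
  case (islitP R Q a)
  then show ?thesis using ev_litP[OF islitP(2,3), of a] by blast
next
  case (islitN R Q a)
  then show ?thesis using ev_litN[OF islitN(2,3), of a] by blast
qed

lemma lit_inj: assumes L: "islit L" and L': "islit L'" and e: "ev0 L = ev0 L'" shows "L = L'"
proof -
  obtain a R Q where RQ: "tt R" "tt Q" and
    A: "(L = LOr (LAnd (At a) R) (LAnd Q Ff) \<and> ev0 L = Nd a (ev0 R) (mul (ev0 Q) (Lf False))) \<or>
    (L = LOr (LAnd (Neg (At a)) R) (LAnd Q Ff) \<and> ev0 L = Nd a (mul (ev0 Q) (Lf False)) (ev0 R))"
    using lit_ev[OF L] by blast
  obtain b R' Q' where RQ': "tt R'" "tt Q'" and
    B: "(L' = LOr (LAnd (At b) R') (LAnd Q' Ff) \<and> ev0 L' = Nd b (ev0 R') (mul (ev0 Q') (Lf False))) \<or>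
    (L' = LOr (LAnd (Neg (At b)) R') (LAnd Q' Ff) \<and> ev0 L' = Nd b (mul (ev0 Q') (Lf False)) (ev0 R'))"
    using lit_ev[OF L'] by blast
  have t: "\<not> hasF (ev0 R)" "\<not> hasF (ev0 R')" "\<not> hasF (ev0 Q)" "\<not> hasF (ev0 Q')"
    using tt_ev RQ RQ' by auto
  have f: "hasF (mul (ev0 Q) (Lf False))" "hasF (mul (ev0 Q') (Lf False))"
    using hasF_mulF t by auto
  have inj: "R = R' \<and> Q = Q'" if "ev0 R = ev0 R'" "mul (ev0 Q) (Lf False) = mul (ev0 Q') (Lf False)"
    using that tt_inj[OF RQ(1) RQ'(1)] tt_inj[OF RQ(2) RQ'(2)] allT_F_inj[OF t(3,4)] by blast
  from A B e show ?thesis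
  proof (elim disjE conjE)
    assume "L = LOr (LAnd (At a) R) (LAnd Q Ff)" "ev0 L = Nd a (ev0 R) (mul (ev0 Q) (Lf False))"
      "L' = LOr (LAnd (At b) R') (LAnd Q' Ff)" "ev0 L' = Nd b (ev0 R') (mul (ev0 Q') (Lf False))"
    then show ?thesis using e inj by simp
  next
    assume "ev0 L = Nd a (ev0 R) (mul (ev0 Q) (Lf False))"
      "ev0 L' = Nd b (mul (ev0 Q') (Lf False)) (ev0 R')"
    then show ?thesis using e t f by simp
  next
    assume "ev0 L = Nd a (mul (ev0 Q) (Lf False)) (ev0 R)"
      "ev0 L' = Nd b (ev0 R') (mul (ev0 Q') (Lf False))"
    then show ?thesis using e t f by simp
  next
    assume "L = LOr (LAnd (Neg (At a)) R) (LAnd Q Ff)" "ev0 L = Nd a (mul (ev0 Q) (Lf False)) (ev0 R)"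
      "L' = LOr (LAnd (Neg (At b)) R') (LAnd Q' Ff)" "ev0 L' = Nd b (mul (ev0 Q') (Lf False)) (ev0 R')"
    then show ?thesis using e inj by simp
  qed
qed

lemma cm_ev: "cm k M \<Longrightarrow> mixed (ev0 M) \<and> pf (ev0 M) \<and> (k = KL \<longrightarrow> LT (ev0 M)) \<and>
   (k \<noteq> KA \<longrightarrow> \<not> pdm (ev0 M)) \<and> (k \<noteq> KO \<longrightarrow> \<not> pda (ev0 M))"
proof (induction rule: cm.induct)
  case (cmL L)
  then show ?case using lit_LT[OF cmL] LT_mixed LT_pf LT_not_pdm LT_not_pda by blast
next
  case (cmA k A k' B)
  have m: "mixed (ev0 (LAnd A B))" using cmA by (simp add: ev_LAnd mixed_mul)
  have p: "pf (ev0 (LAnd A B))" using cmA by (simp add: ev_LAnd pf_mul mixed_def)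
  have "\<not> pda (ev0 (LAnd A B))"
    using cmA impossible unfolding pda_def by (metis ev_LAnd)
  then show ?case using m p by simp
next
  case (cmO k A k' B)
  have m: "mixed (ev0 (LOr A B))" using cmO by (simp add: ev_LOr mixed_add)
  have p: "pf (ev0 (LOr A B))" using cmO by (simp add: ev_LOr pf_add mixed_def)
  have "\<not> pdm (ev0 (LOr A B))"
    using cmO impossible unfolding pdm_def by (metis ev_LOr)
  then show ?case using m p by simp
qed

lemma cm_inj: "cm k M \<Longrightarrow> cm k' M' \<Longrightarrow> ev0 M = ev0 M' \<Longrightarrow> M = M'"
proof (induction arbitrary: k' M' rule: cm.induct)
  case (cmL L)
  from cmL.prems(1) show ?case
  proof (cases rule: cm.cases)
    case cmL then show ?thesis using lit_inj cmL.hyps cmL.prems by blast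
  next
    case (cmA k1 A k2 B)
    then have "pdm (ev0 M')" using cm_ev[of k1 A] cm_ev[of k2 B] unfolding pdm_def
      by (auto simp: ev_LAnd)
    then show ?thesis using LT_not_pdm[OF lit_LT[OF cmL.hyps]] cmL.prems by simp
  next
    case (cmO k1 A k2 B)
    then have "pda (ev0 M')" using cm_ev[of k1 A] cm_ev[of k2 B] unfolding pda_def
      by (auto simp: ev_LOr)
    then show ?thesis using LT_not_pda[OF lit_LT[OF cmL.hyps]] cmL.prems by simp
  qed
next
  case (cmA k A k2 B)
  have eA: "mixed (ev0 A)" "pf (ev0 A)" "\<not> pdm (ev0 A)" using cm_ev[OF cmA.hyps(1)] cmA.hyps(2) by auto
  have eB: "mixed (ev0 B)" "pf (ev0 B)" using cm_ev[OF cmA.hyps(3)] by auto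
  from cmA.prems(1) show ?case
  proof (cases rule: cm.cases)
    case cmL
    have "pdm (ev0 M')" unfolding pdm_def using eA eB cmA.prems(2)
      by (intro exI[of _ "ev0 A"] exI[of _ "ev0 B"]) simp
    then show ?thesis using LT_not_pdm[OF lit_LT[OF cmL(2)]] cmL by simp
  next
    case A2: (cmA k1 A' k3 B')
    have eA': "mixed (ev0 A')" "pf (ev0 A')" "\<not> pdm (ev0 A')" using cm_ev[OF A2(3)] A2(4) by auto
    have eB': "mixed (ev0 B')" "pf (ev0 B')" using cm_ev[OF A2(5)] by auto
    have "ev0 A = ev0 A' \<and> ev0 B = ev0 B'"
      using uniq_mul[of "ev0 A" "ev0 B" "ev0 A'" "ev0 B'"] eA eB eA' eB' cmA.prems(2) A2(2)
      by simp
    then have "A = A'" "B = B'" using cmA.IH(1)[OF A2(3)] cmA.IH(2)[OF A2(5)] by auto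
    then show ?thesis using A2(2) by simp
  next
    case O2: (cmO k1 A' k3 B')
    have "mixed (ev0 A')" "mixed (ev0 B')" using cm_ev[OF O2(3)] cm_ev[OF O2(5)] by auto
    then show ?thesis using impossible[of "ev0 A" "ev0 B" "ev0 A'" "ev0 B'"] eA eB cmA.prems(2) O2(2)
      by simp
  qed
next
  case (cmO k A k2 B)
  have eA: "mixed (ev0 A)" "pf (ev0 A)" "\<not> pda (ev0 A)" using cm_ev[OF cmO.hyps(1)] cmO.hyps(2) by auto
  have eB: "mixed (ev0 B)" "pf (ev0 B)" using cm_ev[OF cmO.hyps(3)] by auto
  from cmO.prems(1) show ?case
  proof (cases rule: cm.cases)
    case cmL
    have "pda (ev0 M')" unfolding pda_def using eA eB cmO.prems(2)
      by (intro exI[of _ "ev0 A"] exI[of _ "ev0 B"]) simp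
    then show ?thesis using LT_not_pda[OF lit_LT[OF cmL(2)]] cmL by simp
  next
    case A2: (cmA k1 A' k3 B')
    have "mixed (ev0 A')" "mixed (ev0 B')" using cm_ev[OF A2(3)] cm_ev[OF A2(5)] by auto
    then show ?thesis using impossible[of "ev0 A'" "ev0 B'" "ev0 A" "ev0 B"] eA eB cmO.prems(2) A2(2)
      by simp
  next
    case O2: (cmO k1 A' k3 B')
    have eA': "mixed (ev0 A')" "pf (ev0 A')" "\<not> pda (ev0 A')" using cm_ev[OF O2(3)] O2(4) by auto
    have eB': "mixed (ev0 B')" "pf (ev0 B')" using cm_ev[OF O2(5)] by auto
    have "ev0 A = ev0 A' \<and> ev0 B = ev0 B'"
      using uniq_add[of "ev0 A" "ev0 B" "ev0 A'" "ev0 B'"] eA eB eA' eB' cmO.prems(2) O2(2)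
      by simp
    then have "A = A'" "B = B'" using cmO.IH(1)[OF O2(3)] cmO.IH(2)[OF O2(5)] by auto
    then show ?thesis using O2(2) by simp
  qed
qed

lemma canonF: "tt p \<Longrightarrow> hasF (ev0 (LAnd p Ff)) \<and> \<not> hasT (ev0 (LAnd p Ff))"
  using tt_ev[of p] leaf_ex[of "ev0 p"] by auto
lemma canonM: "tt p \<Longrightarrow> cm k M \<Longrightarrow> mixed (ev0 (LAnd p M))"
  using tt_ev[of p] cm_ev[of k M] leaf_ex[of "ev0 p"] by (auto simp: mixed_def)

lemma canon_inj: "canon c \<Longrightarrow> canon d \<Longrightarrow> ev0 c = ev0 d \<Longrightarrow> c = d"
proof -
  assume c: "canon c" and d: "canon d" and e: "ev0 c = ev0 d"
  have cls: "(tt x \<and> \<not> hasF (ev0 x)) \<or> (\<exists>p. x = LAnd p Ff \<and> tt p \<and> hasF (ev0 x) \<and> \<not> hasT (ev0 x))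
     \<or> (\<exists>p M k. x = LAnd p M \<and> tt p \<and> cm k M \<and> hasF (ev0 x) \<and> hasT (ev0 x))" if "canon x" for x
    using that
  proof (cases rule: canon_cases)
    case T then show ?thesis using tt_ev by blast
  next
    case (F p) then show ?thesis using canonF[OF F(2)] by blast
  next
    case (M p N k) then show ?thesis using canonM[OF M(2,3)] unfolding mixed_def by blast
  qed
  from cls[OF c] cls[OF d] e show ?thesis
  proof (elim disjE exE conjE)
    assume "tt c" "tt d" then show ?thesis using tt_inj e by blast
  next
    fix p q assume "c = LAnd p Ff" "tt p" "d = LAnd q Ff" "tt q"
    then show ?thesis using e tt_ev[of p] tt_ev[of q] allT_F_inj[of "ev0 p" "ev0 q"] tt_inj[of p q] by simp
  next
    fix p M k q N k2 assume a: "c = LAnd p M" "tt p" "cm k M" "d = LAnd q N" "tt q" "cm k2 N"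
    have pM: "pf (ev0 M)" "pf (ev0 N)" using cm_ev[OF a(3)] cm_ev[OF a(6)] by auto
    have "ev0 p = ev0 q \<and> ev0 M = ev0 N"
      using prefix_uniq[OF tt_ev[OF a(2)] tt_ev[OF a(5)] pM] e a by simp
    then show ?thesis using tt_inj[OF a(2) a(5)] cm_inj[OF a(3) a(6)] a by simp
  qed (simp_all add: e)
qed

lemma EQ_sound: "derivable EqFSCL scl_term t u \<Longrightarrow> ev \<rho> t = ev \<rho> u"
  using sound EqFSCL_valid by blast
lemma FD_sound: "derivable FSCL_ax (\<lambda>_. True) t u \<Longrightarrow> ev \<rho> t = ev \<rho> u"
  using sound FSCL_valid by blast

theorem theorem4p3:
  fixes P Q :: "'a trm"
  assumes "closed_scl P" and "closed_scl Q"
  shows "derivable EqFSCL scl_term P Q \<longleftrightarrow> derivable FSCL_ax (\<lambda>_. True) P Q"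
proof
  assume "derivable EqFSCL scl_term P Q"
  then have "ev0 P = ev0 Q" by (rule EQ_sound)
  then show "derivable FSCL_ax (\<lambda>_. True) P Q"
    using F_complete assms unfolding closed_scl_def by blast
next
  assume "derivable FSCL_ax (\<lambda>_. True) P Q"
  then have e: "ev0 P = ev0 Q" by (rule FD_sound)
  have sP: "scl_term P" "closed P" and sQ: "scl_term Q" "closed Q" using assms unfolding closed_scl_def by auto
  obtain c where c: "canon c" "qev c = qev P" using normalize[OF sP] by blast
  obtain d where d: "canon d" "qev d = qev Q" using normalize[OF sQ] by blast
  have cP: "derivable EqFSCL scl_term c P" using c qev_eq_iff canon_scl sP by blast
  have dQ: "derivable EqFSCL scl_term d Q" using d qev_eq_iff canon_scl sQ by blast
  have "ev0 c = ev0 d" using EQ_sound[OF cP] EQ_sound[OF dQ] e by simp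
  then have "c = d" using canon_inj c d by blast
  then show "derivable EqFSCL scl_term P Q"
    using cP dQ by (metis derivable.sym derivable.trans)
qed

end
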